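(* Consider $2$ agents with additive, identical, normalized valuations, and online algorithms that have no access to predictions. For any given $a \in (\varphi - 1, 1]$, where $\varphi = \frac{1+\sqrt{5}}{2}$, there is no online algorithm that guarantees an $a$-EFX allocation, even if the time horizon $T$ is known to the algorithm in advance.
   Context: Online fair division model: there is a set $N=[n]$ of agents and goods $g_1,\dots,g_T$ that arrive one per time step $t=1,\dots,T$. Each agent $i$ has an additive normalized valuation $v_i$: $v_i(g_t)\ge 0$, $\sum_{t=1}^T v_i(g_t)=1$, and $v_i(S)=\sum_{g\in S} v_i(g)$. Valuations are identical if $v_i=v$ for all agents. When good $g_t$ arrives, its true values $v_i(g_t)$ for all agents are revealed and the algorithm must immediately and irrevocably allocate $g_t$ to one agent. An allocation $A=(A_1,\dots,A_n)$ is a partition of the goods. For a bundle $S\neq\emptyset$ and valuation $f$, let $\bar S^f = S\setminus\{g\}$ where $g\in\arg\max_{g'\in S} f(S\setminus\{g'\})$ (i.e. a least valuable good is removed), and $\bar\emptyset^f=\emptyset$. For $a\in[0,1]$, the allocation is $a$-EFX (with respect to valuations $f_i$) if $f_i(A_i)\ge a\cdot f_i(\bar{A_j}^{f_i})$ for all agents $i,j$. An algorithm guarantees an $a$-EFX allocation if, for every admissible input sequence, the final allocation after all goods have arrived is $a$-EFX with respect to the true valuations. *)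

theory Defs
  imports Complex_Main
begin

text \<open>Goods are indexed by natural numbers (good g_{t+1} is index t).
  bar S f: S with a least valuable good removed (a maximiser of f(S - {g'})).\<close>
definition remove_least :: "(nat \<Rightarrow> real) \<Rightarrow> nat set \<Rightarrow> nat set" where
  "remove_least f S =
     (if S = {} then {}
      else S - {SOME g. g \<in> S \<and> (\<forall>g'\<in>S. sum f (S - {g'}) \<le> sum f (S - {g}))})"

definition a_EFX :: "real \<Rightarrow> ('i \<Rightarrow> nat \<Rightarrow> real) \<Rightarrow> ('i \<Rightarrow> nat set) \<Rightarrow> bool" where
  "a_EFX a f A \<longleftrightarrow> (\<forall>i j. sum (f i) (A i) \<ge> a * sum (f i) (remove_least (f i) (A j)))"

text \<open>Deterministic online algorithm for two agents (agents = bool) with identical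
  valuations and known horizon: given T and the values of the goods arrived so far
  (including the current one), it returns the agent receiving the current good.\<close>
definition online_alloc :: "(nat \<Rightarrow> real list \<Rightarrow> bool) \<Rightarrow> nat \<Rightarrow> real list \<Rightarrow> bool \<Rightarrow> nat set" where
  "online_alloc alg T vs = (\<lambda>i. {t. t < T \<and> alg T (take (Suc t) vs) = i})"

definition admissible :: "nat \<Rightarrow> real list \<Rightarrow> bool" where
  "admissible T vs \<longleftrightarrow> length vs = T \<and> (\<forall>x\<in>set vs. 0 \<le> x) \<and> sum_list vs = 1"

end

theory Submission
  imports Defs
begin

lemma rl_ge:
  assumes "finite S" "g \<in> S"
  shows "sum f (remove_least f S) \<ge> sum f S - f g"
proof -
  have ne: "S \<noteq> {}" using assms by auto
  define h where "h = (\<lambda>g'. sum f (S - {g'}))"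
  have "Max (h ` S) \<in> h ` S" using assms by (intro Max_in) auto
  then obtain g1 where g1: "g1 \<in> S" "h g1 = Max (h ` S)" by auto
  have ex: "\<exists>g. g \<in> S \<and> (\<forall>g'\<in>S. sum f (S - {g'}) \<le> sum f (S - {g}))"
  proof (intro exI[of _ g1] conjI ballI)
    show "g1 \<in> S" by fact
    fix g' assume "g' \<in> S"
    then have "h g' \<le> Max (h ` S)" using assms by (intro Max_ge) auto
    then show "sum f (S - {g'}) \<le> sum f (S - {g1})" using g1 by (simp add: h_def)
  qed
  define g0 where "g0 = (SOME g. g \<in> S \<and> (\<forall>g'\<in>S. sum f (S - {g'}) \<le> sum f (S - {g})))"
  have g0: "g0 \<in> S \<and> (\<forall>g'\<in>S. sum f (S - {g'}) \<le> sum f (S - {g0}))"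
    unfolding g0_def using someI_ex[OF ex] .
  have "remove_least f S = S - {g0}" using ne unfolding remove_least_def g0_def by simp
  then have "sum f (remove_least f S) \<ge> sum f (S - {g})" using g0 assms by auto
  moreover have "sum f (S - {g}) = sum f S - f g" using assms by (simp add: sum_diff1)
  ultimately show ?thesis by simp
qed

lemma viol:
  assumes "finite S" "g \<in> S" "(a::real) > 0" "sum f T \<ge> a * sum f (remove_least f S)"
  shows "sum f T \<ge> a * (sum f S - f g)"
proof -
  have "a * (sum f S - f g) \<le> a * sum f (remove_least f S)"
    using rl_ge[OF assms(1,2), of f] assms(3) by (intro mult_left_mono) auto
  then show ?thesis using assms(4) by linarith
qed

lemma set4: "{t. t < (4::nat) \<and> P t} =
  (if P 0 then {0} else {}) \<union> (if P 1 then {1} else {}) \<union> (if P 2 then {2} else {}) \<union> (if P 3 then {3} else {})"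
proof -
  have e: "t < 4 \<longleftrightarrow> t = 0 \<or> t = 1 \<or> t = 2 \<or> t = (3::nat)" for t by auto
  show ?thesis
  proof (rule set_eqI)
    fix t :: nat
    show "t \<in> {t. t < 4 \<and> P t} \<longleftrightarrow> t \<in> (if P 0 then {0} else {}) \<union> (if P 1 then {1} else {}) \<union> (if P 2 then {2} else {}) \<union> (if P 3 then {3} else {})"
    proof -
      consider "t = 0" | "t = 1" | "t = 2" | "t = 3" | "t \<ge> 4" by linarith
      then show ?thesis by cases auto
    qed
  qed
qed

theorem theorem3p1:
  fixes a :: real
  assumes "(1 + sqrt 5) / 2 - 1 < a" and "a \<le> 1"
  shows "\<not> (\<exists>alg :: nat \<Rightarrow> real list \<Rightarrow> bool.
             \<forall>T vs. admissible T vs \<longrightarrow>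
               a_EFX a (\<lambda>i t. vs ! t) (online_alloc alg T vs))"
proof
  assume "\<exists>alg :: nat \<Rightarrow> real list \<Rightarrow> bool.
             \<forall>T vs. admissible T vs \<longrightarrow>
               a_EFX a (\<lambda>i t. vs ! t) (online_alloc alg T vs)"
  then obtain alg :: "nat \<Rightarrow> real list \<Rightarrow> bool" where H:
    "\<And>T vs. admissible T vs \<Longrightarrow> a_EFX a (\<lambda>i t. vs ! t) (online_alloc alg T vs)" by blast
  have s5: "sqrt 5 < 2 * a + 1" using assms(1) by simp
  have "sqrt 5 \<ge> 0" by simp
  then have "(sqrt 5)^2 < (2*a+1)^2" using s5 by (intro power_strict_mono) auto
  then have qa: "a^2 + a - 1 > 0" by (simp add: power2_eq_square algebra_simps)
  have "1 < sqrt 5" by simp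
  then have apos: "a > 0" using s5 by linarith
  define x where "x = ((1-a)/(1+a) + a/(2+a)) / 2"
  define y where "y = (1 - x) / 2"
  have lo: "(1-a)/(1+a) < a/(2+a)"
  proof -
    have "(1-a)*(2+a) < a*(1+a)" using qa by (simp add: power2_eq_square algebra_simps)
    then show ?thesis using apos by (simp add: field_simps)
  qed
  have mid: "\<And>u v::real. u < v \<Longrightarrow> u < (u+v)/2 \<and> (u+v)/2 < v" by auto
  have x1: "(1-a)/(1+a) < x" and x2: "x < a/(2+a)" using mid[OF lo] unfolding x_def by auto
  have xnn: "x \<ge> 0" using x1 assms(2) apos by (smt (verit) divide_nonneg_pos)
  have c1: "x * (2 + a) < a" using x2 apos by (simp add: field_simps)
  have "a * x \<ge> 0" using xnn apos by simp
  then have xlt: "x < 1" using c1 assms(2) by (simp add: algebra_simps)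
  have c2: "1 - x < a * (1 + x)" using x1 apos by (simp add: field_simps)

  have h1: "2*y = 1-x" unfolding y_def by simp
  have h2: "a*(x+y)*2 = a*(1+x)" unfolding y_def by (simp add: field_simps)
  have h3: "a*y*2 = a - a*x" unfolding y_def by (simp add: field_simps)
  have h4: "x*(2+a) = 2*x+a*x" by (simp add: algebra_simps)
  have h5: "a*(1-x) = a - a*x" by (simp add: algebra_simps)
  have h6: "a*x \<ge> 0" using xnn apos by simp
  have h7: "a*(1-x) > 0" using xlt apos by simp
  define p where "p = alg 4 [0]"
  define q where "q = alg 4 [0, x]"
  show False
  proof (cases "q = p")
    case True
    define vs where "vs = [0, x, y, y]"
    have adm: "admissible 4 vs" using xnn xlt unfolding admissible_def vs_def y_def by auto
    define A where "A = online_alloc alg 4 vs"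
    have E: "\<And>i j. sum (\<lambda>t. vs ! t) (A i) \<ge> a * sum (\<lambda>t. vs ! t) (remove_least (\<lambda>t. vs ! t) (A j))"
      using H[OF adm] unfolding a_EFX_def A_def by blast
    define r where "r = alg 4 [0, x, y]"
    have Aeq: "A i = (if p = i then {0} else {}) \<union> (if q = i then {1} else {}) \<union>
       (if r = i then {2} else {}) \<union> (if alg 4 vs = i then {3} else {})" for i
      unfolding A_def online_alloc_def set4 p_def q_def r_def vs_def by simp
    show False
    proof (cases "r = p")
      case rp: True
      show False
      proof (cases "alg 4 vs = p")
        case True
        have AA: "A p = {0,1,2,3}" "A (\<not>p) = {}" using Aeq rp True \<open>q = p\<close> by auto
        have F: "sum (\<lambda>t. vs ! t) (A (\<not>p)) \<ge> a * (sum (\<lambda>t. vs ! t) (A p) - vs ! 0)"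
          by (rule viol[OF _ _ apos E]) (simp_all add: AA)
        have s1: "sum (\<lambda>t. vs ! t) (A p) - vs ! 0 = x+y+y" by (simp add: AA vs_def)
        have "x+y+y = 1" using h1 by linarith
        then show False using F apos AA(2) s1 by simp
      next
        case False
        have AA: "A p = {0,1,2}" "A (\<not>p) = {3}" using Aeq rp False \<open>q = p\<close> by auto
        have "sum (\<lambda>t. vs ! t) (A (\<not>p)) \<ge> a * (sum (\<lambda>t. vs ! t) (A p) - vs ! 0)"
          by (rule viol[OF _ _ apos E]) (simp_all add: AA)
        then have "vs ! 3 \<ge> a * (sum (\<lambda>t. vs ! t) {0,1,2} - vs ! 0)" using AA by simp
        then have "y \<ge> a*(x+y)" by (simp add: vs_def)
        then show False using c2 h1 h2 by linarith
      qed
    next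
      case rp: False
      show False
      proof (cases "alg 4 vs = p")
        case True
        have AA: "A p = {0,1,3}" "A (\<not>p) = {2}" using Aeq rp True \<open>q = p\<close> by auto
        have "sum (\<lambda>t. vs ! t) (A (\<not>p)) \<ge> a * (sum (\<lambda>t. vs ! t) (A p) - vs ! 0)"
          by (rule viol[OF _ _ apos E]) (simp_all add: AA)
        then have "vs ! 2 \<ge> a * (sum (\<lambda>t. vs ! t) {0,1,3} - vs ! 0)" using AA by simp
        then have "y \<ge> a*(x+y)" by (simp add: vs_def)
        then show False using c2 h1 h2 by linarith
      next
        case False
        have AA: "A p = {0,1}" "A (\<not>p) = {2,3}" using Aeq rp False \<open>q = p\<close> by auto
        have "sum (\<lambda>t. vs ! t) (A p) \<ge> a * (sum (\<lambda>t. vs ! t) (A (\<not>p)) - vs ! 2)"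
          by (rule viol[OF _ _ apos E]) (simp_all add: AA)
        then have "vs ! 0 + vs ! 1 \<ge> a * (sum (\<lambda>t. vs ! t) {2,3} - vs ! 2)" using AA by simp
        then have "x \<ge> a*y" by (simp add: vs_def)
        then show False using c1 h3 h4 h6 by linarith
      qed
    qed
  next
    case False
    define vs where "vs = [0, x, 0, 1 - x]"
    have adm: "admissible 4 vs" using xnn xlt unfolding admissible_def vs_def by auto
    define A where "A = online_alloc alg 4 vs"
    have E: "\<And>i j. sum (\<lambda>t. vs ! t) (A i) \<ge> a * sum (\<lambda>t. vs ! t) (remove_least (\<lambda>t. vs ! t) (A j))"
      using H[OF adm] unfolding a_EFX_def A_def by blast
    define r where "r = alg 4 [0, x, 0]"
    have Aeq: "A i = (if p = i then {0} else {}) \<union> (if q = i then {1} else {}) \<union>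
       (if r = i then {2} else {}) \<union> (if alg 4 vs = i then {3} else {})" for i
      unfolding A_def online_alloc_def set4 p_def q_def r_def vs_def by simp
    have qn: "q = (\<not> p)" using False by auto
    show False
    proof (cases "r = p")
      case rp: True
      show False
      proof (cases "alg 4 vs = p")
        case True
        have AA: "A p = {0,2,3}" "A (\<not>p) = {1}" by (simp_all add: Aeq rp True qn insert_commute)
        have "sum (\<lambda>t. vs ! t) (A (\<not>p)) \<ge> a * (sum (\<lambda>t. vs ! t) (A p) - vs ! 0)"
          by (rule viol[OF _ _ apos E]) (simp_all add: AA)
        then have "vs ! 1 \<ge> a * (sum (\<lambda>t. vs ! t) {0,2,3} - vs ! 0)" using AA by simp
        then have "x \<ge> a*(1-x)" by (simp add: vs_def)
        then show False using c1 h4 h5 h6 xnn by linarith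
      next
        case False
        have AA: "A p = {0,2}" "A (\<not>p) = {1,3}" by (simp_all add: Aeq rp False qn insert_commute)
        have "sum (\<lambda>t. vs ! t) (A p) \<ge> a * (sum (\<lambda>t. vs ! t) (A (\<not>p)) - vs ! 1)"
          by (rule viol[OF _ _ apos E]) (simp_all add: AA)
        then have "vs ! 0 + vs ! 2 \<ge> a * (sum (\<lambda>t. vs ! t) {1,3} - vs ! 1)" using AA by simp
        then have "0 \<ge> a*(1-x)" by (simp add: vs_def)
        then show False using h7 by linarith
      qed
    next
      case rp: False
      show False
      proof (cases "alg 4 vs = p")
        case True
        have AA: "A p = {0,3}" "A (\<not>p) = {1,2}" by (simp_all add: Aeq rp True qn insert_commute)
        have "sum (\<lambda>t. vs ! t) (A (\<not>p)) \<ge> a * (sum (\<lambda>t. vs ! t) (A p) - vs ! 0)"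
          by (rule viol[OF _ _ apos E]) (simp_all add: AA)
        then have "vs ! 1 + vs ! 2 \<ge> a * (sum (\<lambda>t. vs ! t) {0,3} - vs ! 0)" using AA by simp
        then have "x \<ge> a*(1-x)" by (simp add: vs_def)
        then show False using c1 h4 h5 h6 xnn by linarith
      next
        case False
        have AA: "A p = {0}" "A (\<not>p) = {1,2,3}" by (simp_all add: Aeq rp False qn insert_commute)
        have "sum (\<lambda>t. vs ! t) (A p) \<ge> a * (sum (\<lambda>t. vs ! t) (A (\<not>p)) - vs ! 2)"
          by (rule viol[OF _ _ apos E]) (simp_all add: AA)
        then have "vs ! 0 \<ge> a * (sum (\<lambda>t. vs ! t) {1,2,3} - vs ! 2)" using AA by simp
        then have "0 \<ge> a*(1-x+x-0)" by (simp add: vs_def)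
        then show False using apos by simp
      qed
    qed
  qed
qed

end
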